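(* Let $G$ be a finite simple $d$-regular graph on $2n$ vertices ($d\ge 1$) that contains at least one perfect matching. Choose edges of $G$ one at a time in a uniformly random order (without repetition), stopping as soon as every vertex has degree at least one; call the resulting random graph $G_\omega$. Then $$\mathbb{E}\left(\frac{\#\{\text{perfect matchings of } G \text{ contained in } G_\omega\}}{\#\{\text{perfect matchings of } G\}}\right) = \frac{2}{\binom{n+d-1}{n}} - \frac{1}{\binom{n+2d-2}{n}}.$$
   Context: Precisely: a uniformly random ordering $(e_1,\dots,e_m)$ of the $m$ edges of $G$ is chosen, $k$ is the least index such that the graph on $V(G)$ with edges $e_1,\dots,e_k$ has no isolated vertex, and $G_\omega$ is that graph. A perfect matching is a set of edges such that every vertex lies in exactly one of them. *)

theory Defs
  imports "HOL-Probability.Probability"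
begin

definition simple_graph :: "'a set \<Rightarrow> 'a set set \<Rightarrow> bool" where
  "simple_graph V E \<longleftrightarrow> finite V \<and> (\<forall>e\<in>E. e \<subseteq> V \<and> card e = 2)"

definition degree :: "'a set set \<Rightarrow> 'a \<Rightarrow> nat" where
  "degree E v = card {e\<in>E. v \<in> e}"

definition regular :: "'a set \<Rightarrow> 'a set set \<Rightarrow> nat \<Rightarrow> bool" where
  "regular V E d \<longleftrightarrow> (\<forall>v\<in>V. degree E v = d)"

definition perfect_matching :: "'a set \<Rightarrow> 'a set set \<Rightarrow> 'a set set \<Rightarrow> bool" where
  "perfect_matching V E M \<longleftrightarrow> M \<subseteq> E \<and> (\<forall>v\<in>V. \<exists>!e. e \<in> M \<and> v \<in> e)"

definition perfect_matchings :: "'a set \<Rightarrow> 'a set set \<Rightarrow> 'a set set set" where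
  "perfect_matchings V E = {M. perfect_matching V E M}"

definition edge_orderings :: "'a set set \<Rightarrow> 'a set list set" where
  "edge_orderings E = {es. distinct es \<and> set es = E}"

definition no_isolated :: "'a set \<Rightarrow> 'a set set \<Rightarrow> bool" where
  "no_isolated V F \<longleftrightarrow> (\<forall>v\<in>V. \<exists>e\<in>F. v \<in> e)"

definition stop_index :: "'a set \<Rightarrow> 'a set list \<Rightarrow> nat" where
  "stop_index V es = (LEAST k. no_isolated V (set (take k es)))"

definition G_omega :: "'a set \<Rightarrow> 'a set list \<Rightarrow> 'a set set" where
  "G_omega V es = set (take (stop_index V es) es)"

end

theory Submission
  imports Defs "HOL-Combinatorics.Multiset_Permutations"
begin

definition goodset :: "'b set \<Rightarrow> 'b set \<Rightarrow> 'b \<Rightarrow> 'b set \<Rightarrow> 'b list set" where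
  "goodset E P e Q = {es. distinct es \<and> set es = E \<and> (\<exists>xs ys. es = xs @ e # ys \<and> P \<subseteq> set xs \<and> Q \<subseteq> set ys)}"

definition Hs :: "'b set \<Rightarrow> 'b set \<Rightarrow> 'b \<Rightarrow> 'b set \<Rightarrow> 'b \<Rightarrow> 'b list set" where
  "Hs E P e Q x = {xs. distinct xs \<and> set xs = E - {x} \<and>
      (\<exists>as bs. xs @ [x] = as @ e # bs \<and> P \<subseteq> set as \<and> Q \<subseteq> set bs)}"

lemma goodset_decomp:
  assumes "e \<in> E"
  shows "goodset E P e Q = (\<Union>x\<in>E. (\<lambda>xs. xs @ [x]) ` Hs E P e Q x)"
proof (rule set_eqI, rule iffI)
  fix es assume es: "es \<in> goodset E P e Q"
  then have ne: "es \<noteq> []" using assms by (auto simp: goodset_def)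
  then obtain ys y where eq: "es = ys @ [y]" using rev_exhaust by blast
  show "es \<in> (\<Union>x\<in>E. (\<lambda>xs. xs @ [x]) ` Hs E P e Q x)"
    using es unfolding eq goodset_def Hs_def by auto
next
  fix es assume "es \<in> (\<Union>x\<in>E. (\<lambda>xs. xs @ [x]) ` Hs E P e Q x)"
  then obtain x xs where x: "x \<in> E" and xs: "xs \<in> Hs E P e Q x" and es: "es = xs @ [x]" by blast
  from xs have d: "distinct (xs @ [x])" and s: "set (xs @ [x]) = E" using x unfolding Hs_def by auto
  from xs obtain as bs where "xs @ [x] = as @ e # bs" "P \<subseteq> set as" "Q \<subseteq> set bs" unfolding Hs_def by blast
  then show "es \<in> goodset E P e Q" using d s es unfolding goodset_def by blast
qed

lemma Hs_P:
  assumes "x \<in> P" "e \<notin> P"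
  shows "Hs E P e Q x = {}"
proof -
  { fix xs as bs assume d: "distinct xs" "x \<notin> set xs" and eq: "xs @ [x] = as @ e # bs" and "P \<subseteq> set as"
    then have xa: "x \<in> set as" using assms by auto
    have False
    proof (cases bs rule: rev_cases)
      case Nil then show ?thesis using eq assms xa by auto
    next
      case (snoc bs' b) then show ?thesis using eq d xa by auto
    qed }
  then show ?thesis unfolding Hs_def by auto
qed

lemma Hs_e:
  shows "Hs E P e Q e = (if Q = {} \<and> P \<subseteq> E - {e} then permutations_of_set (E - {e}) else {})"
proof -
  { fix xs as bs assume d: "e \<notin> set xs" and eq: "xs @ [e] = as @ e # bs"
    have "bs = [] \<and> as = xs"
    proof (cases bs rule: rev_cases)
      case Nil then show ?thesis using eq by auto
    next
      case (snoc bs' b) then show ?thesis using eq d by auto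
    qed }
  note aux = this
  show ?thesis
  proof (cases "Q = {} \<and> P \<subseteq> E - {e}")
    case True
    show ?thesis
    proof (rule set_eqI)
      fix xs
      show "xs \<in> Hs E P e Q e \<longleftrightarrow> xs \<in> (if Q = {} \<and> P \<subseteq> E - {e} then permutations_of_set (E - {e}) else {})"
      proof
        assume "xs \<in> Hs E P e Q e" then show "xs \<in> (if Q = {} \<and> P \<subseteq> E - {e} then permutations_of_set (E - {e}) else {})"
          using True unfolding Hs_def permutations_of_set_def by auto
      next
        assume "xs \<in> (if Q = {} \<and> P \<subseteq> E - {e} then permutations_of_set (E - {e}) else {})"
        then have "distinct xs" "set xs = E - {e}" using True unfolding permutations_of_set_def by auto
        moreover have "xs @ [e] = xs @ e # [] \<and> P \<subseteq> set xs \<and> Q \<subseteq> set []" using True \<open>set xs = E - {e}\<close> by auto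
        ultimately show "xs \<in> Hs E P e Q e" unfolding Hs_def by blast
      qed
    qed
  next
    case False
    show ?thesis
    proof (rule set_eqI)
      fix xs
      have "xs \<notin> Hs E P e Q e"
      proof
        assume "xs \<in> Hs E P e Q e"
        then obtain as bs where "e \<notin> set xs" "set xs = E - {e}" "xs @ [e] = as @ e # bs" "P \<subseteq> set as" "Q \<subseteq> set bs"
          unfolding Hs_def by blast
        with aux[of xs as bs] False show False by auto
      qed
      then show "xs \<in> Hs E P e Q e \<longleftrightarrow> xs \<in> (if Q = {} \<and> P \<subseteq> E - {e} then permutations_of_set (E - {e}) else {})"
        using False by (simp only: if_False) blast
    qed
  qed
qed

lemma Hs_other:
  assumes "x \<noteq> e"
  shows "Hs E P e Q x = goodset (E - {x}) P e (Q - {x})"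
proof -
  { fix xs
    have "(\<exists>as bs. xs @ [x] = as @ e # bs \<and> P \<subseteq> set as \<and> Q \<subseteq> set bs) \<longleftrightarrow>
          (\<exists>as bs. xs = as @ e # bs \<and> P \<subseteq> set as \<and> Q - {x} \<subseteq> set bs)"
    proof
      assume "\<exists>as bs. xs @ [x] = as @ e # bs \<and> P \<subseteq> set as \<and> Q \<subseteq> set bs"
      then obtain as bs where eq: "xs @ [x] = as @ e # bs" and "P \<subseteq> set as" "Q \<subseteq> set bs" by blast
      then show "\<exists>as bs. xs = as @ e # bs \<and> P \<subseteq> set as \<and> Q - {x} \<subseteq> set bs"
      proof (cases bs rule: rev_cases)
        case Nil then show ?thesis using eq assms by auto
      next
        case (snoc bs' b)
        then have "xs = as @ e # bs'" "b = x" using eq by auto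
        then show ?thesis using snoc \<open>P \<subseteq> set as\<close> \<open>Q \<subseteq> set bs\<close> by auto
      qed
    next
      assume "\<exists>as bs. xs = as @ e # bs \<and> P \<subseteq> set as \<and> Q - {x} \<subseteq> set bs"
      then obtain as bs where "xs = as @ e # bs" "P \<subseteq> set as" "Q - {x} \<subseteq> set bs" by blast
      then show "\<exists>as bs. xs @ [x] = as @ e # bs \<and> P \<subseteq> set as \<and> Q \<subseteq> set bs"
        by (intro exI[of _ as] exI[of _ "bs @ [x]"]) auto
    qed }
  note eqv = this
  show ?thesis
  proof (rule set_eqI)
    fix xs show "xs \<in> Hs E P e Q x \<longleftrightarrow> xs \<in> goodset (E - {x}) P e (Q - {x})"
      unfolding Hs_def goodset_def mem_Collect_eq using eqv[of xs] by blast
  qed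
qed

lemma arith_l0_abs: "(B::real) > 0 \<Longrightarrow> k \<ge> 0 \<Longrightarrow> r * (A * B * 1 / ((k + 1) * B)) + A = (k + 1 + r) * A * B * 1 / ((k + 1) * B)"
proof -
  assume h: "B > 0" "k \<ge> 0"
  then have "(k + 1) * B \<noteq> 0" by simp
  then show ?thesis by (simp add: divide_simps) (simp add: algebra_simps)
qed

lemma arith_l0:
  "real r * (fact (k + r) * fact k * 1 / fact (k + 0 + 1)) + fact (k + r)
   = fact (k + 1 + r) * fact k * 1 / fact (k + 0 + 1)"
proof -
  have a: "(fact (k + 1 + r) :: real) = (real k + 1 + real r) * fact (k + r)"
    by (metis add.commute add_Suc_right fact_Suc plus_1_eq_Suc of_nat_fact of_nat_mult of_nat_add of_nat_1)
  have b: "(fact (k + 0 + 1) :: real) = (real k + 1) * fact k" by simp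
  show ?thesis unfolding a b using arith_l0_abs[of "fact k" "real k" "real r" "fact (k + r)"] by simp
qed

lemma arith_lS_abs: "(D::real) > 0 \<Longrightarrow> s > 0 \<Longrightarrow>
   L * (G * K * Fl / D) + r * (G * K * (L * Fl) / (s * D)) = (s + r) * G * K * (L * Fl) / (s * D)"
  by (simp add: field_simps)

lemma arith_lS:
  "real (Suc l) * (fact (k + Suc l + r) * fact k * fact l / fact (k + l + 1))
   + real r * (fact (k + Suc l + r) * fact k * fact (Suc l) / fact (k + Suc l + 1))
   = fact (k + 1 + Suc l + r) * fact k * fact (Suc l) / fact (k + Suc l + 1)"
proof -
  have a: "(fact (k + 1 + Suc l + r) :: real) = (real (k + Suc l + 1) + real r) * fact (k + Suc l + r)"
    by (metis add.commute add_Suc_right fact_Suc plus_1_eq_Suc of_nat_fact of_nat_mult of_nat_add)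
  have b: "(fact (k + Suc l + 1) :: real) = real (k + Suc l + 1) * fact (k + l + 1)"
    by (metis add_Suc_right fact_Suc of_nat_fact of_nat_mult add_Suc)
  have c: "(fact (Suc l) :: real) = real (Suc l) * fact l" by simp
  show ?thesis unfolding a b c
    by (rule arith_lS_abs) auto
qed

lemma goodset_card:
  assumes "finite E" "e \<in> E" "P \<subseteq> E" "Q \<subseteq> E" "e \<notin> P" "e \<notin> Q" "P \<inter> Q = {}"
  shows "real (card (goodset E P e Q)) = fact (card E) * fact (card P) * fact (card Q) / fact (card P + card Q + 1)"
  using assms
proof (induction "card E" arbitrary: E Q rule: less_induct)
  case less
  define R where "R = E - P - Q - {e}"
  define k where "k = card P"
  define l where "l = card Q"
  define r where "r = card R"
  have finP: "finite P" and finQ: "finite Q" and finR: "finite R"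
    using less.prems finite_subset unfolding R_def by auto
  have Edec: "E = P \<union> insert e (Q \<union> R)" using less.prems unfolding R_def by auto
  have cardE: "card E = k + 1 + l + r"
  proof -
    have "card E = card P + card (insert e (Q \<union> R))"
      unfolding Edec using finP finQ finR less.prems by (intro card_Un_disjoint) (auto simp: R_def)
    also have "card (insert e (Q \<union> R)) = 1 + card (Q \<union> R)"
      using finQ finR less.prems by (auto simp: R_def)
    also have "card (Q \<union> R) = card Q + card R"
      using finQ finR by (intro card_Un_disjoint) (auto simp: R_def)
    finally show ?thesis unfolding k_def l_def r_def by simp
  qed
  have finH: "finite (Hs E P e Q x)" for x
  proof (rule finite_subset[OF _ finite_permutations_of_set[of "E - {x}"]])
    show "Hs E P e Q x \<subseteq> permutations_of_set (E - {x})" by (auto simp: Hs_def permutations_of_set_def)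
  qed
  have "card (goodset E P e Q) = card (\<Union>x\<in>E. (\<lambda>xs. xs @ [x]) ` Hs E P e Q x)"
    using goodset_decomp[OF less.prems(2)] by simp
  also have "\<dots> = (\<Sum>x\<in>E. card ((\<lambda>xs. xs @ [x]) ` Hs E P e Q x))"
    by (rule card_UN_disjoint) (use less.prems finH in auto)
  also have "\<dots> = (\<Sum>x\<in>E. card (Hs E P e Q x))"
    by (rule sum.cong) (auto simp: card_image inj_on_def)
  finally have c1: "real (card (goodset E P e Q)) = (\<Sum>x\<in>E. real (card (Hs E P e Q x)))" by simp
  have sP: "(\<Sum>x\<in>P. real (card (Hs E P e Q x))) = 0"
    using Hs_P[OF _ less.prems(5)] by (intro sum.neutral) simp
  have se: "real (card (Hs E P e Q e)) = (if l = 0 then fact (k + l + r) else 0)"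
  proof -
    have "P \<subseteq> E - {e}" using less.prems by auto
    then show ?thesis using finQ cardE less.prems(1,2)
      unfolding Hs_e l_def by (auto simp: card_Diff_singleton)
  qed
  have sQ: "real (card (Hs E P e Q x)) = fact (k + l + r) * fact k * fact (l - 1) / fact (k + (l - 1) + 1)"
    if x: "x \<in> Q" for x
  proof -
    have "x \<noteq> e" using x less.prems by auto
    have "real (card (Hs E P e Q x)) = real (card (goodset (E - {x}) P e (Q - {x})))"
      unfolding Hs_other[OF \<open>x \<noteq> e\<close>] ..
    also have "\<dots> = fact (card (E - {x})) * fact (card P) * fact (card (Q - {x})) / fact (card P + card (Q - {x}) + 1)"
      by (rule less.hyps) (use less.prems x in \<open>auto intro!: card_Diff1_less\<close>)
    also have "card (E - {x}) = k + l + r" using cardE x less.prems by (auto simp: card_Diff_singleton)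
    also have "card (Q - {x}) = l - 1" using x finQ unfolding l_def by (simp add: card_Diff_singleton)
    finally show ?thesis unfolding k_def .
  qed
  have sR: "real (card (Hs E P e Q x)) = fact (k + l + r) * fact k * fact l / fact (k + l + 1)"
    if x: "x \<in> R" for x
  proof -
    have "x \<noteq> e" "x \<notin> Q" using x unfolding R_def by auto
    have "real (card (Hs E P e Q x)) = real (card (goodset (E - {x}) P e (Q - {x})))"
      unfolding Hs_other[OF \<open>x \<noteq> e\<close>] ..
    also have "Q - {x} = Q" using \<open>x \<notin> Q\<close> by auto
    also have "real (card (goodset (E - {x}) P e Q)) = fact (card (E - {x})) * fact (card P) * fact (card Q) / fact (card P + card Q + 1)"
      by (rule less.hyps) (use less.prems x in \<open>auto simp: R_def intro!: diff_less card_gt_0_iff[THEN iffD2]\<close>)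
    also have "card (E - {x}) = k + l + r" using cardE x less.prems by (auto simp: card_Diff_singleton R_def)
    finally show ?thesis unfolding k_def l_def .
  qed
  have "(\<Sum>x\<in>E. real (card (Hs E P e Q x))) =
        (\<Sum>x\<in>P. real (card (Hs E P e Q x))) + (real (card (Hs E P e Q e)) +
        ((\<Sum>x\<in>Q. real (card (Hs E P e Q x))) + (\<Sum>x\<in>R. real (card (Hs E P e Q x)))))"
    unfolding Edec using finP finQ finR less.prems
    by (subst sum.union_disjoint; (subst sum.insert)?; (subst sum.union_disjoint)?) (auto simp: R_def)
  also have "(\<Sum>x\<in>Q. real (card (Hs E P e Q x))) = real l * (fact (k + l + r) * fact k * fact (l - 1) / fact (k + (l - 1) + 1))"
    using sQ unfolding l_def by simp
  also have "(\<Sum>x\<in>R. real (card (Hs E P e Q x))) = real r * (fact (k + l + r) * fact k * fact l / fact (k + l + 1))"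
    using sR unfolding r_def by simp
  finally have c2: "real (card (goodset E P e Q)) = (if l = 0 then fact (k + l + r) else 0) +
     (real l * (fact (k + l + r) * fact k * fact (l - 1) / fact (k + (l - 1) + 1)) +
      real r * (fact (k + l + r) * fact k * fact l / fact (k + l + 1)))"
    using c1 sP se by simp
  show ?case
  proof (cases l)
    case 0
    show ?thesis unfolding cardE k_def[symmetric] l_def[symmetric] c2 0
      using arith_l0[of r k] by (simp add: add.commute)
  next
    case (Suc l')
    show ?thesis unfolding cardE k_def[symmetric] l_def[symmetric] c2 Suc
      using arith_lS[of l' k r] by (simp add: add.commute add.left_commute)
  qed
qed

definition nbr :: "'a set set \<Rightarrow> 'a \<Rightarrow> 'a set set" where
  "nbr E u = {g\<in>E. u \<in> g}"

lemma stop_props: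
  assumes "no_isolated V (set es)"
  shows "no_isolated V (set (take (stop_index V es) es))"
    and "\<And>j. j < stop_index V es \<Longrightarrow> \<not> no_isolated V (set (take j es))"
proof -
  have "no_isolated V (set (take (length es) es))" using assms by simp
  then show "no_isolated V (set (take (stop_index V es) es))"
    unfolding stop_index_def by (rule LeastI)
  show "\<And>j. j < stop_index V es \<Longrightarrow> \<not> no_isolated V (set (take j es))"
    unfolding stop_index_def by (rule not_less_Least)
qed

lemma no_isolated_mono: "no_isolated V A \<Longrightarrow> A \<subseteq> B \<Longrightarrow> no_isolated V B"
  unfolding no_isolated_def by blast

lemma charact:
  assumes sg: "simple_graph V E"
    and es: "distinct es" "set es = E"
    and M: "perfect_matching V E M" and Mne: "M \<noteq> {}"
  shows "M \<subseteq> G_omega V es \<longleftrightarrow> (\<exists>e\<in>M. \<exists>u\<in>e. es \<in> goodset E (M - {e}) e (nbr E u - {e}))"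
proof
  have EV: "\<And>g. g \<in> E \<Longrightarrow> g \<subseteq> V \<and> card g = 2" using sg unfolding simple_graph_def by blast
  have ME: "M \<subseteq> E" and Muniq: "\<And>v. v \<in> V \<Longrightarrow> \<exists>!e. e \<in> M \<and> v \<in> e"
    using M unfolding perfect_matching_def by auto
  have noE: "no_isolated V (set es)" using es ME Muniq unfolding no_isolated_def by blast
  note sp = stop_props[OF noE]
  define k where "k = stop_index V es"
  assume sub: "M \<subseteq> G_omega V es"
  then have sub': "M \<subseteq> set (take k es)" unfolding G_omega_def k_def .
  obtain e0 where "e0 \<in> M" using Mne by blast
  then have "card e0 = 2" "e0 \<subseteq> V" using EV ME by auto
  then have "V \<noteq> {}" by auto
  have "k \<noteq> 0"
  proof
    assume "k = 0"
    then have "no_isolated V {}" using sp(1) unfolding k_def by simp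
    then show False using \<open>V \<noteq> {}\<close> unfolding no_isolated_def by blast
  qed
  then obtain j where kj: "k = Suc j" using not0_implies_Suc by blast
  have nj: "\<not> no_isolated V (set (take j es))" using sp(2)[of j] kj unfolding k_def by simp
  then obtain w where w: "w \<in> V" "\<And>g. g \<in> set (take j es) \<Longrightarrow> w \<notin> g"
    unfolding no_isolated_def by blast
  have jl: "j < length es"
  proof (rule ccontr)
    assume "\<not> j < length es"
    then have "take j es = es" by simp
    then show False using nj noE by simp
  qed
  have tk: "set (take k es) = insert (es ! j) (set (take j es))"
    using jl kj by (simp add: take_Suc_conv_app_nth)
  obtain ew where ew: "ew \<in> M" "w \<in> ew" using Muniq[OF w(1)] by blast
  have "ew \<notin> set (take j es)" using w(2) ew(2) by blast
  then have ewj: "ew = es ! j" using ew(1) sub' tk by blast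
  have split: "es = take j es @ ew # drop (Suc j) es" using jl ewj by (simp add: id_take_nth_drop)
  have P: "M - {ew} \<subseteq> set (take j es)" using sub' tk ewj by blast
  have Q: "nbr E w - {ew} \<subseteq> set (drop (Suc j) es)"
  proof
    fix g assume g: "g \<in> nbr E w - {ew}"
    then have "g \<in> set es" "w \<in> g" "g \<noteq> ew" using es unfolding nbr_def by auto
    then have "g \<in> set (take j es @ ew # drop (Suc j) es)" using split by simp
    then show "g \<in> set (drop (Suc j) es)" using w(2) \<open>w \<in> g\<close> \<open>g \<noteq> ew\<close> by auto
  qed
  have "es \<in> goodset E (M - {ew}) ew (nbr E w - {ew})"
    unfolding goodset_def using es split P Q by blast
  then show "\<exists>e\<in>M. \<exists>u\<in>e. es \<in> goodset E (M - {e}) e (nbr E u - {e})" using ew by blast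
next
  have EV: "\<And>g. g \<in> E \<Longrightarrow> g \<subseteq> V \<and> card g = 2" using sg unfolding simple_graph_def by blast
  have ME: "M \<subseteq> E" and Muniq: "\<And>v. v \<in> V \<Longrightarrow> \<exists>!e. e \<in> M \<and> v \<in> e"
    using M unfolding perfect_matching_def by auto
  have noE: "no_isolated V (set es)" using es ME Muniq unfolding no_isolated_def by blast
  note sp = stop_props[OF noE]
  define k where "k = stop_index V es"
  assume "\<exists>e\<in>M. \<exists>u\<in>e. es \<in> goodset E (M - {e}) e (nbr E u - {e})"
  then obtain e u xs ys where eM: "e \<in> M" and ue: "u \<in> e" and spl: "es = xs @ e # ys"
      and P: "M - {e} \<subseteq> set xs" and Q: "nbr E u - {e} \<subseteq> set ys"
    unfolding goodset_def by blast
  have uV: "u \<in> V" using EV ME eM ue by blast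
  have dd: "distinct (xs @ e # ys)" using es spl by simp
  have "length xs < k"
  proof (rule ccontr)
    assume "\<not> length xs < k"
    then have "set (take k es) \<subseteq> set (take (length xs) es)" by (simp add: set_take_subset_set_take)
    also have "take (length xs) es = xs" using spl by simp
    finally have "no_isolated V (set xs)" using sp(1) no_isolated_mono unfolding k_def by blast
    then obtain g where g: "g \<in> set xs" "u \<in> g" using uV unfolding no_isolated_def by blast
    then have "g \<in> E" using es spl by auto
    moreover have "g \<noteq> e" using g dd by auto
    ultimately have "g \<in> set ys" using Q g unfolding nbr_def by blast
    then show False using g dd by auto
  qed
  then have "set (take (Suc (length xs)) es) \<subseteq> set (take k es)" by (simp add: set_take_subset_set_take)
  moreover have "take (Suc (length xs)) es = xs @ [e]" using spl by simp
  ultimately have "insert e (set xs) \<subseteq> set (take k es)" by simp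
  then show "M \<subseteq> G_omega V es" using P unfolding G_omega_def k_def by blast
qed

lemma split_unique:
  assumes "distinct (xs @ e # ys)" "xs @ e # ys = xs' @ e # ys'"
  shows "xs = xs' \<and> ys = ys'"
proof -
  have "e \<notin> set xs" "e \<notin> set ys" using assms(1) by auto
  then show ?thesis using append_Cons_eq_iff[of e xs ys xs' ys'] assms(2) by blast
qed

lemma goodset_Int:
  "goodset E P e Q1 \<inter> goodset E P e Q2 = goodset E P e (Q1 \<union> Q2)"
proof (rule set_eqI, rule iffI)
  fix es assume "es \<in> goodset E P e Q1 \<inter> goodset E P e Q2"
  then obtain xs ys xs' ys' where d: "distinct es" "set es = E" and
    a: "es = xs @ e # ys" "P \<subseteq> set xs" "Q1 \<subseteq> set ys" and
    b: "es = xs' @ e # ys'" "P \<subseteq> set xs'" "Q2 \<subseteq> set ys'" unfolding goodset_def by blast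
  have d1: "distinct (xs @ e # ys)" using d a by simp
  have d2: "xs @ e # ys = xs' @ e # ys'" using a b by simp
  have "xs = xs' \<and> ys = ys'" using split_unique[OF d1 d2] .
  then show "es \<in> goodset E P e (Q1 \<union> Q2)" using a b d unfolding goodset_def by blast
next
  fix es assume "es \<in> goodset E P e (Q1 \<union> Q2)"
  then show "es \<in> goodset E P e Q1 \<inter> goodset E P e Q2" unfolding goodset_def by blast
qed

lemma goodset_disj:
  assumes "e \<in> M" "e' \<in> M" "e \<noteq> e'"
  shows "goodset E (M - {e}) e Q \<inter> goodset E (M - {e'}) e' Q' = {}"
proof (rule ccontr)
  assume "goodset E (M - {e}) e Q \<inter> goodset E (M - {e'}) e' Q' \<noteq> {}"
  then obtain es xs ys xs' ys' where d: "distinct es" and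
    a: "es = xs @ e # ys" "M - {e} \<subseteq> set xs" and
    b: "es = xs' @ e' # ys'" "M - {e'} \<subseteq> set xs'" unfolding goodset_def by blast
  have "e' \<in> set xs" using a assms by blast
  then obtain as bs where xs: "xs = as @ e' # bs" by (meson split_list)
  have es2: "es = as @ e' # (bs @ e # ys)" using a xs by simp
  have d': "distinct (as @ e' # (bs @ e # ys))" using d es2 by simp
  have eq: "as @ e' # (bs @ e # ys) = xs' @ e' # ys'" using es2 b(1) by simp
  have "as = xs'" using split_unique[OF d' eq] by simp
  moreover have "e \<in> set xs'" using b assms by blast
  ultimately show False using d' by simp
qed

lemma count_M:
  assumes sg: "simple_graph V E" and cV: "card V = 2 * n" and d1: "d \<ge> 1"
    and reg: "regular V E d" and M: "perfect_matching V E M"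
  shows "real (card {es \<in> permutations_of_set E. M \<subseteq> G_omega V es}) =
    fact (card E) * (2 / real ((n + d - 1) choose n) - 1 / real ((n + 2 * d - 2) choose n))"
proof -
  have EV: "\<And>g. g \<in> E \<Longrightarrow> g \<subseteq> V \<and> card g = 2" and finV: "finite V"
    using sg unfolding simple_graph_def by blast+
  have finE: "finite E"
    by (rule finite_subset[of E "Pow V"]) (use EV finV in auto)
  have ME: "M \<subseteq> E" and Muniq: "\<And>v. v \<in> V \<Longrightarrow> \<exists>!e. e \<in> M \<and> v \<in> e"
    using M unfolding perfect_matching_def by auto
  have finM: "finite M" using ME finE finite_subset by blast
  have UM: "\<Union>M = V" using ME EV Muniq by blast
  have "card (\<Union>M) = sum card M"
  proof (rule card_Union_disjoint)
    show "pairwise disjnt M" unfolding pairwise_def disjnt_def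
    proof (intro ballI impI)
      fix a b assume ab: "a \<in> M" "b \<in> M" "a \<noteq> b"
      show "a \<inter> b = {}"
      proof (rule ccontr)
        assume "a \<inter> b \<noteq> {}"
        then obtain x where "x \<in> a" "x \<in> b" by blast
        then have "x \<in> V" using ab ME EV by blast
        then show False using Muniq ab \<open>x \<in> a\<close> \<open>x \<in> b\<close> by blast
      qed
    qed
    show "\<And>A. A \<in> M \<Longrightarrow> finite A" using ME EV finV finite_subset by blast
  qed
  also have "sum card M = sum (\<lambda>_. 2) M" using ME EV by (intro sum.cong) auto
  finally have cM: "card M = n" using UM cV by simp
  show ?thesis
  proof (cases "n = 0")
    case True
    then have "M = {}" using cM finM by simp
    then have "{es \<in> permutations_of_set E. M \<subseteq> G_omega V es} = permutations_of_set E" by auto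
    then show ?thesis using True finE by simp
  next
    case False
    then have Mne: "M \<noteq> {}" using cM by auto
    define G where "G e u = goodset E (M - {e}) e (nbr E u - {e})" for e u
    have set_eq: "{es \<in> permutations_of_set E. M \<subseteq> G_omega V es} = (\<Union>e\<in>M. \<Union>u\<in>e. G e u)"
    proof (rule set_eqI)
      fix es
      show "es \<in> {es \<in> permutations_of_set E. M \<subseteq> G_omega V es} \<longleftrightarrow> es \<in> (\<Union>e\<in>M. \<Union>u\<in>e. G e u)"
      proof (cases "es \<in> permutations_of_set E")
        case True
        then have "distinct es" "set es = E" unfolding permutations_of_set_def by auto
        then show ?thesis using charact[OF sg _ _ M Mne] True unfolding G_def by auto
      next
        case False
        then show ?thesis unfolding G_def goodset_def permutations_of_set_def by auto
      qed
    qed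
    have finG: "finite (G e u)" for e u
    proof (rule finite_subset[OF _ finite_permutations_of_set[of E]])
      show "G e u \<subseteq> permutations_of_set E" unfolding G_def goodset_def permutations_of_set_def by auto
    qed
    define a :: real where "a = fact (card E) * fact (n - 1) * fact (d - 1) / fact (n - 1 + (d - 1) + 1)"
    define b :: real where "b = fact (card E) * fact (n - 1) * fact (2 * d - 2) / fact (n - 1 + (2 * d - 2) + 1)"
    have nbr_card: "card (nbr E u) = d" if "u \<in> V" for u
      using reg that unfolding regular_def degree_def nbr_def by blast
    have finN: "finite (nbr E u)" for u using finE unfolding nbr_def by auto
    have per_e: "real (card (\<Union>u\<in>e. G e u)) = 2 * a - b" if eM: "e \<in> M" for e
    proof -
      have eE: "e \<in> E" using eM ME by blast
      obtain u v where uv: "e = {u, v}" "u \<noteq> v" using EV[OF eE] card_2_iff by metis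
      have uV: "u \<in> V" and vV: "v \<in> V" using EV[OF eE] uv by auto
      have PE: "M - {e} \<subseteq> E" using ME by blast
      have cP: "card (M - {e}) = n - 1" using cM eM finM by (simp add: card_Diff_singleton)
      have disjw: "(M - {e}) \<inter> (nbr E w - {e}) = {}" if "w \<in> e" for w
        using Muniq[of w] that eM EV[OF eE] unfolding nbr_def by blast
      have cQ: "card (nbr E w - {e}) = d - 1" if "w \<in> e" for w
        using nbr_card[of w] that EV[OF eE] eE finN[of w] unfolding nbr_def
        by (subst card_Diff_singleton) (auto simp: nbr_def)
      have Gw: "real (card (G e w)) = a" if "w \<in> e" for w
      proof -
        have QE: "nbr E w - {e} \<subseteq> E" unfolding nbr_def by blast
        have "real (card (G e w)) = fact (card E) * fact (card (M - {e})) * fact (card (nbr E w - {e})) /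
             fact (card (M - {e}) + card (nbr E w - {e}) + 1)"
          unfolding G_def
          by (rule goodset_card[OF finE eE PE QE]) (use disjw[OF that] in auto)
        then show ?thesis unfolding a_def cP cQ[OF that] .
      qed
      have inter: "nbr E u \<inter> nbr E v = {e}"
      proof
        show "nbr E u \<inter> nbr E v \<subseteq> {e}"
        proof
          fix g assume g: "g \<in> nbr E u \<inter> nbr E v"
          then have "g \<in> E" "u \<in> g" "v \<in> g" unfolding nbr_def by auto
          then have "card g = 2" "{u, v} \<subseteq> g" using EV by auto
          moreover have "finite g" using \<open>card g = 2\<close> by (intro card_ge_0_finite) simp
          ultimately have "g = {u, v}" using uv(2) by (metis card_2_iff card_subset_eq finite_insert finite.emptyI)
          then show "g \<in> {e}" using uv by simp
        qed
        show "{e} \<subseteq> nbr E u \<inter> nbr E v" using eE uv unfolding nbr_def by auto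
      qed
      have cU: "card ((nbr E u - {e}) \<union> (nbr E v - {e})) = 2 * d - 2"
      proof -
        have "card ((nbr E u - {e}) \<union> (nbr E v - {e})) = card (nbr E u - {e}) + card (nbr E v - {e})"
          using inter finN by (intro card_Un_disjoint) auto
        then show ?thesis using cQ[of u] cQ[of v] uv d1 by simp
      qed
      have disjU: "(M - {e}) \<inter> ((nbr E u - {e}) \<union> (nbr E v - {e})) = {}"
        using disjw[of u] disjw[of v] uv by auto
      have Guv: "real (card (G e u \<inter> G e v)) = b"
      proof -
        have QE: "(nbr E u - {e}) \<union> (nbr E v - {e}) \<subseteq> E" unfolding nbr_def by blast
        have "real (card (G e u \<inter> G e v)) = fact (card E) * fact (card (M - {e})) * fact (card ((nbr E u - {e}) \<union> (nbr E v - {e}))) /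
             fact (card (M - {e}) + card ((nbr E u - {e}) \<union> (nbr E v - {e})) + 1)"
          unfolding G_def goodset_Int
          by (rule goodset_card[OF finE eE PE QE]) (use disjU in auto)
        then show ?thesis unfolding b_def cP cU .
      qed
      have "card (G e u \<union> G e v) + card (G e u \<inter> G e v) = card (G e u) + card (G e v)"
        by (rule card_Un_Int[OF finG finG, symmetric])
      then have "real (card (G e u \<union> G e v)) = real (card (G e u)) + real (card (G e v)) - real (card (G e u \<inter> G e v))"
        by (metis add_diff_cancel_right' of_nat_add)
      then have "real (card (G e u \<union> G e v)) = 2 * a - b" using Gw[of u] Gw[of v] Guv uv by simp
      moreover have "(\<Union>w\<in>e. G e w) = G e u \<union> G e v" using uv by auto
      ultimately show ?thesis by simp
    qed
    have "card (\<Union>e\<in>M. \<Union>u\<in>e. G e u) = (\<Sum>e\<in>M. card (\<Union>u\<in>e. G e u))"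
    proof (rule card_UN_disjoint[OF finM])
      show "\<forall>e\<in>M. finite (\<Union>u\<in>e. G e u)"
      proof
        fix e assume "e \<in> M"
        then have "card e = 2" using ME EV by blast
        then have "finite e" by (intro card_ge_0_finite) simp
        then show "finite (\<Union>u\<in>e. G e u)" using finG by blast
      qed
      show "\<forall>e\<in>M. \<forall>e'\<in>M. e \<noteq> e' \<longrightarrow> (\<Union>u\<in>e. G e u) \<inter> (\<Union>u\<in>e'. G e' u) = {}"
      proof (intro ballI impI)
        fix e e' assume h: "e \<in> M" "e' \<in> M" "e \<noteq> e'"
        show "(\<Union>u\<in>e. G e u) \<inter> (\<Union>u\<in>e'. G e' u) = {}"
        proof (rule ccontr)
          assume "(\<Union>u\<in>e. G e u) \<inter> (\<Union>u\<in>e'. G e' u) \<noteq> {}"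
          then obtain es u u' where "es \<in> G e u" "es \<in> G e' u'" by blast
          then show False using goodset_disj[OF h, of E "nbr E u - {e}" "nbr E u' - {e'}"] unfolding G_def by blast
        qed
      qed
    qed
    then have "real (card {es \<in> permutations_of_set E. M \<subseteq> G_omega V es}) = (\<Sum>e\<in>M. real (card (\<Union>u\<in>e. G e u)))"
      unfolding set_eq by simp
    also have "\<dots> = real n * (2 * a - b)" using per_e cM by simp
    also have "\<dots> = fact (card E) * (2 / real ((n + d - 1) choose n) - 1 / real ((n + 2 * d - 2) choose n))"
    proof -
      obtain n' where n': "n = Suc n'" using False not0_implies_Suc by blast
      obtain d' where d': "d = Suc d'" using d1 not0_implies_Suc by (metis not_one_le_zero)
      have c1: "real ((n + d - 1) choose n) = fact (n + d - 1) / (fact n * fact (d - 1))"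
        using binomial_fact[of n "n + d - 1", where 'a=real] d1 by simp
      have c2: "real ((n + 2 * d - 2) choose n) = fact (n + 2 * d - 2) / (fact n * fact (2 * d - 2))"
        using binomial_fact[of n "n + 2 * d - 2", where 'a=real] d1 by simp
      have na: "real n * a = fact (card E) * (fact n * fact (d - 1) / fact (n + d - 1))"
        unfolding a_def n' d' by (simp add: field_simps)
      have nb: "real n * b = fact (card E) * (fact n * fact (2 * d - 2) / fact (n + 2 * d - 2))"
        unfolding b_def n' d' by (simp add: field_simps)
      have e0: "real n * (2 * a - b) = 2 * (real n * a) - real n * b" by (simp add: algebra_simps)
      have "real n * (2 * a - b) = 2 * (fact (card E) * (fact n * fact (d - 1) / fact (n + d - 1)))
          - fact (card E) * (fact n * fact (2 * d - 2) / fact (n + 2 * d - 2))"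
        unfolding e0 na nb ..
      also have "\<dots> = fact (card E) * (2 / (fact (n + d - 1) / (fact n * fact (d - 1))) - 1 / (fact (n + 2 * d - 2) / (fact n * fact (2 * d - 2))))"
        by (simp add: algebra_simps)
      finally show ?thesis unfolding c1 c2 .
    qed
    finally show ?thesis .
  qed
qed

lemma pm_sub:
  assumes "F \<subseteq> E"
  shows "perfect_matching V F M \<longleftrightarrow> perfect_matching V E M \<and> M \<subseteq> F"
proof -
  have aux: "\<And>U. (M \<subseteq> F \<and> U) \<longleftrightarrow> ((M \<subseteq> E \<and> U) \<and> M \<subseteq> F)" using assms by blast
  show ?thesis unfolding perfect_matching_def by (rule aux)
qed

lemma card_filter_sum: "finite A \<Longrightarrow> card {x\<in>A. P x} = (\<Sum>x\<in>A. if P x then 1 else 0)"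
  unfolding card_eq_sum[of "{x\<in>A. P x}"] by (rule sum.inter_filter)

theorem corollary2:
  fixes V :: "'a set" and E :: "'a set set" and n d :: nat
  assumes "simple_graph V E"
    and "card V = 2 * n"
    and "d \<ge> 1"
    and "regular V E d"
    and "perfect_matchings V E \<noteq> {}"
  shows "measure_pmf.expectation (pmf_of_set (edge_orderings E))
           (\<lambda>es. real (card (perfect_matchings V (G_omega V es)))
                 / real (card (perfect_matchings V E)))
         = 2 / real ((n + d - 1) choose n) - 1 / real ((n + 2 * d - 2) choose n)"
proof -
  define \<rho> where "\<rho> = 2 / real ((n + d - 1) choose n) - 1 / real ((n + 2 * d - 2) choose n)"
  define S where "S = permutations_of_set E"
  define PM where "PM = perfect_matchings V E"
  have EV: "\<And>g. g \<in> E \<Longrightarrow> g \<subseteq> V" and finV: "finite V"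
    using assms(1) unfolding simple_graph_def by blast+
  have finE: "finite E"
    by (rule finite_subset[of E "Pow V"]) (use EV finV in auto)
  have SE: "edge_orderings E = S" unfolding S_def edge_orderings_def permutations_of_set_def by auto
  have finS: "finite S" and neS: "S \<noteq> {}" and cS: "card S = fact (card E)"
    unfolding S_def using finE by auto
  have finPM: "finite PM"
  proof (rule finite_subset[of PM "Pow E"])
    show "PM \<subseteq> Pow E"
    proof
      fix M assume "M \<in> PM"
      then have "perfect_matching V E M" unfolding PM_def perfect_matchings_def by simp
      then have "M \<subseteq> E" unfolding perfect_matching_def by (elim conjE)
      then show "M \<in> Pow E" by simp
    qed
  qed (use finE in auto)
  have "PM \<noteq> {}" using assms(5) unfolding PM_def .
  then have pPM: "card PM > 0" using finPM card_gt_0_iff by blast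
  have D: "perfect_matchings V (G_omega V es) = {M\<in>PM. M \<subseteq> G_omega V es}" if "es \<in> S" for es
  proof -
    have "set es = E" using that unfolding S_def by (rule permutations_of_setD)
    moreover have "G_omega V es \<subseteq> set es" unfolding G_omega_def by (rule set_take_subset)
    ultimately have "G_omega V es \<subseteq> E" by simp
    then show ?thesis unfolding PM_def perfect_matchings_def pm_sub[OF \<open>G_omega V es \<subseteq> E\<close>] by simp
  qed
  have dc: "(\<Sum>es\<in>S. card {M\<in>PM. M \<subseteq> G_omega V es}) = (\<Sum>M\<in>PM. card {es\<in>S. M \<subseteq> G_omega V es})"
  proof -
    have "(\<Sum>es\<in>S. card {M\<in>PM. M \<subseteq> G_omega V es}) = (\<Sum>es\<in>S. \<Sum>M\<in>PM. if M \<subseteq> G_omega V es then 1 else 0)"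
      by (rule sum.cong) (simp_all only: card_filter_sum[OF finPM])
    also have "\<dots> = (\<Sum>M\<in>PM. \<Sum>es\<in>S. if M \<subseteq> G_omega V es then 1 else 0)"
      by (rule sum.swap)
    also have "\<dots> = (\<Sum>M\<in>PM. card {es\<in>S. M \<subseteq> G_omega V es})"
      by (rule sum.cong) (simp_all only: card_filter_sum[OF finS])
    finally show ?thesis .
  qed
  have each: "real (card {es\<in>S. M \<subseteq> G_omega V es}) = fact (card E) * \<rho>" if "M \<in> PM" for M
  proof -
    have "perfect_matching V E M" using that unfolding PM_def perfect_matchings_def by simp
    from count_M[OF assms(1-4) this] show ?thesis unfolding S_def \<rho>_def .
  qed
  have "measure_pmf.expectation (pmf_of_set S)
           (\<lambda>es. real (card (perfect_matchings V (G_omega V es))) / real (card PM))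
        = (\<Sum>es\<in>S. real (card (perfect_matchings V (G_omega V es))) / real (card PM)) / real (card S)"
    by (rule integral_pmf_of_set[OF neS finS])
  also have "(\<Sum>es\<in>S. real (card (perfect_matchings V (G_omega V es))) / real (card PM))
      = (\<Sum>es\<in>S. real (card {M\<in>PM. M \<subseteq> G_omega V es}) / real (card PM))"
    by (rule sum.cong) (simp_all only: D)
  also have "\<dots> = (\<Sum>es\<in>S. real (card {M\<in>PM. M \<subseteq> G_omega V es})) / real (card PM)"
    by (rule sum_divide_distrib[symmetric])
  also have "(\<Sum>es\<in>S. real (card {M\<in>PM. M \<subseteq> G_omega V es})) = (\<Sum>M\<in>PM. real (card {es\<in>S. M \<subseteq> G_omega V es}))"
    unfolding of_nat_sum[symmetric] dc ..
  also have "\<dots> = (\<Sum>M\<in>PM. fact (card E) * \<rho>)"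
    by (rule sum.cong[OF refl each])
  also have "\<dots> = real (card PM) * (fact (card E) * \<rho>)"
    by (rule sum_constant)
  also have "real (card PM) * (fact (card E) * \<rho>) / real (card PM) / real (card S) = \<rho>"
  proof -
    have "real (card PM) \<noteq> 0" using pPM by simp
    moreover have "real (card S) = fact (card E)" using cS by simp
    moreover have "(fact (card E) :: real) \<noteq> 0" by simp
    ultimately show ?thesis by (simp add: field_simps)
  qed
  finally have "measure_pmf.expectation (pmf_of_set S)
           (\<lambda>es. real (card (perfect_matchings V (G_omega V es))) / real (card PM)) = \<rho>" .
  then show ?thesis unfolding SE PM_def \<rho>_def .
qed

end
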